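(* Let $K$ be a product formula field and $f\in K[z]$ a polynomial of degree $d\ge3$ with a finite superattracting fixed point $p_0$ (so $f(p_0)=p_0$, $f'(p_0)=0$) and a nonarchimedean place $v$ of bad reduction. Let $r>0$ be the radius of the largest disk about $p_0$ contained in $\mathcal K_v$. Then there is a sequence of Berkovich disks $\mathcal B_i\subseteq\mathcal K_v$ and real numbers $r_i>r$ such that $\delta_v(z,p_0)=r_i$ for all $z\in\mathcal B_i$, and $r_i\to r$ as $i\to\infty$.
   Context: $\mathbf A^1_v$ is the Berkovich affine line over $\mathbb C_v$ (completion of an algebraic closure of $K_v$). $\mathcal K_v=\bigcup_{M>0}\{x\in\mathbf A^1_v:[f^n]_x\le M\ \forall n\ge0\}$ is the Berkovich $v$-adic filled Julia set. $v$ is a place of bad reduction for $f$ if $\mathcal K_v$ is not a Berkovich disk (equivalently, the $v$-adic Julia set is not a Type II point). $\delta_v(x,y)$ is the Hsia kernel relative to $\infty$ on $\mathbf A^1_v$ (extending $|x-y|_v$ on $\mathbb C_v$). *)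

theory Defs
  imports Complex_Main "HOL-Computational_Algebra.Polynomial"
begin

definition abs_value :: "('a::field \<Rightarrow> real) \<Rightarrow> bool" where
  "abs_value a \<longleftrightarrow> (\<forall>x. 0 \<le> a x) \<and> (\<forall>x. a x = 0 \<longleftrightarrow> x = 0)
     \<and> (\<forall>x y. a (x * y) = a x * a y) \<and> (\<forall>x y. a (x + y) \<le> a x + a y)"

definition nonarch :: "('a::field \<Rightarrow> real) \<Rightarrow> bool" where
  "nonarch a \<longleftrightarrow> (\<forall>x y. a (x + y) \<le> max (a x) (a y))"

definition product_formula_field ::
  "'i set \<Rightarrow> ('i \<Rightarrow> 'a::field \<Rightarrow> real) \<Rightarrow> ('i \<Rightarrow> real) \<Rightarrow> bool" where
  "product_formula_field M absv nv \<longleftrightarrow>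
     (\<forall>i\<in>M. abs_value (absv i) \<and> nv i > 0 \<and> (\<exists>x. x \<noteq> 0 \<and> absv i x \<noteq> 1)) \<and>
     (\<forall>x. x \<noteq> 0 \<longrightarrow> finite {i\<in>M. absv i x \<noteq> 1} \<and>
        (\<Prod>i\<in>{i\<in>M. absv i x \<noteq> 1}. absv i x powr nv i) = 1)"

text \<open>(L, absL, iota) is (isometrically isomorphic to) C_v: an algebraically closed complete
  valued field extending (K, absK) in which the algebraic closure of K is dense.\<close>
definition is_Cv :: "('a::field \<Rightarrow> real) \<Rightarrow> ('b::field \<Rightarrow> real) \<Rightarrow> ('a \<Rightarrow> 'b) \<Rightarrow> bool" where
  "is_Cv absK absL \<iota> \<longleftrightarrow>
     abs_value absL \<and>
     \<iota> 0 = 0 \<and> \<iota> 1 = 1 \<and> (\<forall>x y. \<iota> (x + y) = \<iota> x + \<iota> y) \<and> (\<forall>x y. \<iota> (x * y) = \<iota> x * \<iota> y) \<and>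
     (\<forall>x. absL (\<iota> x) = absK x) \<and>
     (\<forall>p::'b poly. degree p > 0 \<longrightarrow> (\<exists>z. poly p z = 0)) \<and>
     (\<forall>X::nat \<Rightarrow> 'b. (\<forall>e>0. \<exists>N. \<forall>m\<ge>N. \<forall>n\<ge>N. absL (X m - X n) < e) \<longrightarrow>
          (\<exists>l. \<forall>e>0. \<exists>N. \<forall>n\<ge>N. absL (X n - l) < e)) \<and>
     (\<forall>z e. e > 0 \<longrightarrow> (\<exists>w p. p \<noteq> 0 \<and> poly (map_poly \<iota> p) w = 0 \<and> absL (z - w) < e))"

definition berk_point :: "('b::field \<Rightarrow> real) \<Rightarrow> ('b poly \<Rightarrow> real) \<Rightarrow> bool" where
  "berk_point absL x \<longleftrightarrow> (\<forall>p. 0 \<le> x p) \<and> (\<forall>p q. x (p * q) = x p * x q)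
     \<and> (\<forall>p q. x (p + q) \<le> x p + x q) \<and> (\<forall>c. x [:c:] = absL c)"

definition berk_line :: "('b::field \<Rightarrow> real) \<Rightarrow> ('b poly \<Rightarrow> real) set" where
  "berk_line absL = {x. berk_point absL x}"

definition classical_pt :: "('b::field \<Rightarrow> real) \<Rightarrow> 'b \<Rightarrow> ('b poly \<Rightarrow> real)" where
  "classical_pt absL a = (\<lambda>p. absL (poly p a))"

definition berk_disk :: "('b::field \<Rightarrow> real) \<Rightarrow> 'b \<Rightarrow> real \<Rightarrow> ('b poly \<Rightarrow> real) set" where
  "berk_disk absL a s = {x \<in> berk_line absL. x [:-a, 1:] \<le> s}"

definition is_berk_disk :: "('b::field \<Rightarrow> real) \<Rightarrow> ('b poly \<Rightarrow> real) set \<Rightarrow> bool" where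
  "is_berk_disk absL B \<longleftrightarrow> (\<exists>a s. s > 0 \<and> B = berk_disk absL a s)"

definition poly_iter :: "'b::comm_ring_1 poly \<Rightarrow> nat \<Rightarrow> 'b poly" where
  "poly_iter g n = ((\<lambda>p. pcompose g p) ^^ n) [:0, 1:]"

definition filled_julia :: "('b::field \<Rightarrow> real) \<Rightarrow> 'b poly \<Rightarrow> ('b poly \<Rightarrow> real) set" where
  "filled_julia absL g = {x \<in> berk_line absL. \<exists>M>0. \<forall>n. x (poly_iter g n) \<le> M}"

definition hsia :: "('b::field \<Rightarrow> real) \<Rightarrow> ('b poly \<Rightarrow> real) \<Rightarrow> ('b poly \<Rightarrow> real) \<Rightarrow> real" where
  "hsia absL x y = Inf {s. \<exists>a. x [:-a, 1:] \<le> s \<and> y [:-a, 1:] \<le> s}"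

end

theory Submission
  imports Defs
begin

lemma pow_beats_linear:
  fixes a :: real assumes "a > 1" shows "\<exists>n::nat. real n + 1 < a ^ n"
proof -
  define b where "b = sqrt a"
  have b1: "b > 1" using assms by (simp add: b_def)
  define e where "e = b - 1"
  have e0: "e > 0" using b1 by (simp add: e_def)
  obtain n :: nat where n: "n > 1 / e^2" using reals_Archimedean2 by blast
  have "1 + real n * e \<le> (1 + e)^n" by (rule Bernoulli_inequality) (use e0 in simp)
  hence B: "1 + real n * e \<le> b^n" by (simp add: e_def)
  have "(b^n)^2 = (b^2)^n" by (simp add: power_mult[symmetric] mult.commute)
  also have "b^2 = a" using assms by (simp add: b_def)
  finally have "a ^ n = (b^n)^2" by simp
  also have "(b^n)^2 \<ge> (1 + real n * e)^2"
    using B e0 by (intro power_mono) auto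
  finally have A: "a^n \<ge> (1 + real n * e)^2" .
  have "real n * e^2 > 1" using n e0 by (simp add: field_simps)
  hence "real n * (real n * e^2) > real n" using n e0
    by (metis mult.right_neutral mult_less_cancel_left_pos of_nat_0_less_iff zero_less_divide_1_iff zero_less_power gr_zeroI of_nat_0 not_less_zero  less_trans)
  moreover have "e * (real n * 2) \<ge> 0" using e0 by simp
  moreover have "(1 + real n * e)^2 = 1 + e*(real n*2) + real n * (real n * e^2)"
    by (simp add: power2_eq_square algebra_simps)
  ultimately have "(1 + real n * e)^2 > real n + 1" by linarith
  thus ?thesis using A by (intro exI[of _ n]) linarith
qed

definition umn :: "('r::comm_ring_1 \<Rightarrow> real) \<Rightarrow> bool" where
  "umn N \<longleftrightarrow> (\<forall>a. 0 \<le> N a) \<and> N 0 = 0 \<and> N 1 = 1 \<and> (\<forall>a b. N (a*b) = N a * N b)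
     \<and> (\<forall>a b. N (a+b) \<le> max (N a) (N b))"

lemma ultra_from_arch:
  fixes N :: "'r::comm_ring_1 \<Rightarrow> real"
  assumes nn: "\<And>a. 0 \<le> N a" and z: "N 0 = 0" and mul: "\<And>a b. N (a*b) = N a * N b"
    and tri: "\<And>a b. N (a+b) \<le> N a + N b" and nat: "\<And>m. N (of_nat m) \<le> 1"
  shows "N (a+b) \<le> max (N a) (N b)"
proof (rule ccontr)
  assume ca: "\<not> ?thesis"
  define M where "M = max (N a) (N b)"
  have M0: "M \<ge> 0" using nn by (simp add: M_def le_max_iff_disj)
  have powle: "N (x^k) \<le> N x ^ k" for x k
  proof (induction k)
    case 0 then show ?case using nat[of 1] by simp
  next
    case (Suc k) then show ?case using nn by (simp add: mul mult_left_mono)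
  qed
  have powe: "N (x^k) = N x ^ k" if "k \<ge> 1" for x k
    using that
  proof (induction k)
    case 0 then show ?case by simp
  next
    case (Suc k) then show ?case by (cases k) (simp_all add: mul)
  qed
  have sumle: "N (sum f I) \<le> (\<Sum>i\<in>I. N (f i))" for f :: "nat \<Rightarrow> 'r" and I
  proof (induction I rule: infinite_finite_induct)
    case (infinite A) then show ?case using z by simp
  next
    case empty then show ?case using z by simp
  next
    case (insert x F) then show ?case using tri[of "f x" "sum f F"] by simp
  qed
  have key: "N (a+b) ^ n \<le> (real n + 1) * M ^ n" if "n \<ge> 1" for n
  proof -
    have "N (a+b) ^ n = N ((a+b)^n)" using powe that by simp
    also have "(a+b)^n = (\<Sum>k\<le>n. of_nat (n choose k) * a^k * b^(n-k))"
      by (rule binomial_ring)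
    also have "N \<dots> \<le> (\<Sum>k\<le>n. N (of_nat (n choose k) * a^k * b^(n-k)))" by (rule sumle)
    also have "\<dots> \<le> (\<Sum>k\<le>n. M ^ n)"
    proof (rule sum_mono)
      fix k assume "k \<in> {..n}"
      hence kn: "k \<le> n" by simp
      have "N (of_nat (n choose k) * a^k * b^(n-k)) = N (of_nat (n choose k)) * N (a^k) * N (b^(n-k))"
        by (simp add: mul)
      also have "\<dots> \<le> 1 * M^k * M^(n-k)"
      proof (intro mult_mono)
        show "N (of_nat (n choose k)) \<le> 1" by (rule nat)
        show "N (a^k) \<le> M^k" using powle[of a k] power_mono[of "N a" M k] nn
          by (simp add: M_def)
        show "N (b^(n-k)) \<le> M^(n-k)" using powle[of b "n-k"] nn
          by (simp add: M_def) (meson max.cobounded2 order_trans power_mono)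
      qed (use nn M0 in auto)
      also have "\<dots> = M^n" using kn by (simp add: power_add[symmetric])
      finally show "N (of_nat (n choose k) * a^k * b^(n-k)) \<le> M^n" .
    qed
    also have "\<dots> = (real n + 1) * M^n" by simp
    finally show ?thesis .
  qed
  show False
  proof (cases "M = 0")
    case True
    then show ?thesis using key[of 1] ca by (simp add: M_def)
  next
    case False
    hence Mp: "M > 0" using M0 by simp
    have q1: "N (a+b) / M > 1" using ca Mp by (simp add: field_simps M_def[symmetric])
    obtain n where n: "real n + 1 < (N (a+b) / M) ^ n" using pow_beats_linear[OF q1] by blast
    have "n \<ge> 1" using n by (cases n) auto
    hence "(N (a+b) / M) ^ n \<le> real n + 1" using key[of n] Mp by (simp add: power_divide field_simps)
    then show ?thesis using n by simp
  qed
qed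

context fixes N :: "'r::comm_ring_1 \<Rightarrow> real" assumes U: "umn N"
begin

lemma umn_nn: "0 \<le> N a" using U by (simp add: umn_def)
lemma umn_0: "N 0 = 0" using U by (simp add: umn_def)
lemma umn_1: "N 1 = 1" using U by (simp add: umn_def)
lemma umn_mult: "N (a*b) = N a * N b" using U by (simp add: umn_def)
lemma umn_add: "N (a+b) \<le> max (N a) (N b)" using U by (simp add: umn_def)

lemma umn_m1: "N (-1) = 1"
proof -
  have "N (-1) * N (-1) = 1" using umn_mult[of "-1" "-1"] umn_1 by simp
  thus ?thesis using umn_nn[of "-1"] by (metis mult_le_cancel_left1 mult_le_cancel_right1 nle_le not_less zero_less_one mult_cancel_left1 less_eq_real_def  )
qed

lemma umn_neg: "N (-a) = N a"
  using umn_mult[of "-1" a] umn_m1 by simp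

lemma umn_diff: "N (a-b) \<le> max (N a) (N b)"
  using umn_add[of a "-b"] umn_neg[of b] by simp

lemma umn_dom: assumes "N y < N x" shows "N (x+y) = N x"
proof -
  have "N x \<le> max (N (x+y)) (N y)" using umn_diff[of "x+y" y] by simp
  hence "N x \<le> N (x+y)" using assms by (auto simp: max_def split: if_splits)
  moreover have "N (x+y) \<le> N x" using umn_add[of x y] assms by simp
  ultimately show ?thesis by simp
qed

lemma umn_neq: assumes "N a \<noteq> N b" shows "N (a+b) = max (N a) (N b)"
  using umn_dom[of a b] umn_dom[of b a] assms by (cases "N a < N b") (auto simp: add.commute max_def)

lemma umn_sum_le: assumes "\<And>i. i \<in> I \<Longrightarrow> N (f i) \<le> B" "0 \<le> B" shows "N (sum f I) \<le> B"
  using assms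
proof (induction I rule: infinite_finite_induct)
  case (infinite A) then show ?case using umn_0 by simp
next
  case empty then show ?case using umn_0 by simp
next
  case (insert x F) then show ?case using umn_add[of "f x" "sum f F"]
    by (metis max.bounded_iff order_trans sum.insert insert_iff)
qed

lemma umn_sum_less: assumes "\<And>i. i \<in> I \<Longrightarrow> N (f i) < B" "0 < B" shows "N (sum f I) < B"
  using assms
proof (induction I rule: infinite_finite_induct)
  case (infinite A) then show ?case using umn_0 by simp
next
  case empty then show ?case using umn_0 by simp
next
  case (insert x F) then show ?case using umn_add[of "f x" "sum f F"]
    by (metis max_less_iff_conj order_le_less_trans sum.insert insert_iff)
qed

lemma umn_pow: "N (x^k) = N x ^ k"
  by (induction k) (simp_all add: umn_1 umn_mult)

lemma umn_prod_mset: "N (prod_mset (image_mset f R)) = prod_mset (image_mset (\<lambda>z. N (f z)) R)"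
  by (induction R) (simp_all add: umn_1 umn_mult)

end

fun mx :: "(nat \<Rightarrow> real) \<Rightarrow> real \<Rightarrow> nat \<Rightarrow> real" where
  "mx B s 0 = B 0"
| "mx B s (Suc n) = max (mx B s n) (B (Suc n) * s ^ Suc n)"

lemma mx_ge: "k \<le> n \<Longrightarrow> B k * s^k \<le> mx B s n"
proof (induction n)
  case 0 then show ?case by simp
next
  case (Suc n) then show ?case by (cases "k = Suc n") (auto simp: le_Suc_eq le_max_iff_disj)
qed

lemma mx_ex: "\<exists>k\<le>n. mx B s n = B k * s^k"
proof (induction n)
  case 0 then show ?case by simp
next
  case (Suc n) then show ?case by (auto simp: max_def intro: le_SucI)
qed

definition gn0 :: "('b::field \<Rightarrow> real) \<Rightarrow> real \<Rightarrow> 'b poly \<Rightarrow> real" where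
  "gn0 A s p = mx (\<lambda>k. A (coeff p k)) s (degree p)"

definition av :: "('b::field \<Rightarrow> real) \<Rightarrow> bool" where
  "av A \<longleftrightarrow> umn A \<and> (\<forall>x. A x = 0 \<longrightarrow> x = 0)"

context fixes A :: "'b::field \<Rightarrow> real" assumes AV: "av A"
begin

lemma A_umn: "umn A" using AV by (simp add: av_def)
lemma A_nn: "0 \<le> A x" using umn_nn[OF A_umn] .
lemma A_0[simp]: "A 0 = 0" using umn_0[OF A_umn] .
lemma A_1[simp]: "A 1 = 1" using umn_1[OF A_umn] .
lemma A_mult: "A (x*y) = A x * A y" using umn_mult[OF A_umn] .
lemma A_eq0: "A x = 0 \<longleftrightarrow> x = 0" using AV by (auto simp: av_def)
lemma A_pos: "x \<noteq> 0 \<Longrightarrow> A x > 0" using A_nn[of x] A_eq0[of x] by linarith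
lemma A_neg: "A (-x) = A x" using umn_neg[OF A_umn] .
lemma A_commute: "A (x - y) = A (y - x)" using A_neg[of "x - y"] by simp

lemma gn0_ge: assumes "s \<ge> 0" shows "A (coeff p k) * s^k \<le> gn0 A s p"
proof (cases "k \<le> degree p")
  case True then show ?thesis using mx_ge[of k "degree p" "\<lambda>k. A (coeff p k)" s] by (simp add: gn0_def)
next
  case False
  hence "coeff p k = 0" by (simp add: coeff_eq_0)
  moreover have "A (coeff p 0) * s^0 \<le> gn0 A s p"
    using mx_ge[of 0 "degree p" "\<lambda>k. A (coeff p k)" s] by (simp add: gn0_def)
  ultimately show ?thesis using A_nn[of "coeff p 0"] by simp
qed

lemma gn0_ex: "\<exists>k. gn0 A s p = A (coeff p k) * s^k"
  using mx_ex by (metis gn0_def)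

lemma gn0_le: assumes "\<And>k. A (coeff p k) * s^k \<le> M" shows "gn0 A s p \<le> M"
  using gn0_ex[of s p] assms by metis

lemma gn0_nn: "s \<ge> 0 \<Longrightarrow> 0 \<le> gn0 A s p"
  using gn0_ge[of s p 0] A_nn[of "coeff p 0"] by simp

lemma gn0_zero[simp]: "gn0 A s 0 = 0"
  by (simp add: gn0_def)

lemma gn0_pos: assumes "s > 0" "p \<noteq> 0" shows "gn0 A s p > 0"
proof -
  have "A (coeff p (degree p)) > 0" using assms A_pos by simp
  hence "A (coeff p (degree p)) * s ^ degree p > 0" using assms by simp
  thus ?thesis using gn0_ge[of s p "degree p"] assms by linarith
qed

lemma gn0_const[simp]: "gn0 A s [:a:] = A a"
  by (simp add: gn0_def)

lemma gn0_at0: "gn0 A 0 p = A (coeff p 0)"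
proof (rule antisym)
  show "gn0 A 0 p \<le> A (coeff p 0)"
    by (rule gn0_le) (case_tac k, auto simp: A_nn)
  show "A (coeff p 0) \<le> gn0 A 0 p" using gn0_ge[of 0 p 0] by simp
qed

lemma gn0_add: assumes "s \<ge> 0" shows "gn0 A s (p + q) \<le> max (gn0 A s p) (gn0 A s q)"
proof (rule gn0_le)
  fix k
  have "A (coeff (p+q) k) \<le> max (A (coeff p k)) (A (coeff q k))"
    using umn_add[OF A_umn] by simp
  hence "A (coeff (p+q) k) \<le> A (coeff p k) \<or> A (coeff (p+q) k) \<le> A (coeff q k)"
    by (auto simp: max_def split: if_splits)
  hence "A (coeff (p+q) k) * s^k \<le> A (coeff p k) * s^k \<or> A (coeff (p+q) k) * s^k \<le> A (coeff q k) * s^k"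
    using assms by (auto intro: mult_right_mono)
  thus "A (coeff (p+q) k) * s^k \<le> max (gn0 A s p) (gn0 A s q)"
    using gn0_ge[OF assms, of p k] gn0_ge[OF assms, of q k] by (auto simp: le_max_iff_disj)
qed

lemma gn0_mult_le: assumes "s > 0" shows "gn0 A s (p * q) \<le> gn0 A s p * gn0 A s q"
proof (rule gn0_le)
  fix n
  have B: "A (coeff p i * coeff q (n - i)) \<le> gn0 A s p * gn0 A s q / s^n" if "i \<in> {..n}" for i
  proof -
    have "A (coeff p i) * s^i * (A (coeff q (n-i)) * s^(n-i)) \<le> gn0 A s p * gn0 A s q"
      using gn0_ge[of s p i] gn0_ge[of s q "n-i"] assms A_nn gn0_nn[of s p]
      by (intro mult_mono) auto
    moreover have eq: "s^n = s^i * s^(n-i)" using that by (simp add: power_add[symmetric])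
    moreover have "A (coeff p i * coeff q (n - i)) * s^n = A (coeff p i) * s^i * (A (coeff q (n-i)) * s^(n-i))"
      unfolding A_mult eq by (simp only: mult_ac)
    ultimately have "A (coeff p i * coeff q (n - i)) * s^n \<le> gn0 A s p * gn0 A s q" by linarith
    thus ?thesis using assms by (simp add: field_simps)
  qed
  have "A (coeff (p*q) n) \<le> gn0 A s p * gn0 A s q / s^n"
    unfolding coeff_mult
    by (rule umn_sum_le[OF A_umn]) (use B assms gn0_nn in auto)
  thus "A (coeff (p*q) n) * s^n \<le> gn0 A s p * gn0 A s q"
    using assms by (simp add: field_simps)
qed

lemma max_index:
  assumes "s > 0" "p \<noteq> 0"
  obtains i where "A (coeff p i) * s^i = gn0 A s p" "\<And>k. k > i \<Longrightarrow> A (coeff p k) * s^k < gn0 A s p"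
proof -
  define I where "I = {i. A (coeff p i) * s^i = gn0 A s p}"
  have gp: "gn0 A s p > 0" using gn0_pos assms by simp
  have "I \<subseteq> {..degree p}"
  proof
    fix i assume "i \<in> I"
    hence "A (coeff p i) * s^i > 0" using gp by (simp add: I_def)
    hence "coeff p i \<noteq> 0" by auto
    thus "i \<in> {..degree p}" using le_degree by auto
  qed
  hence fin: "finite I" using finite_subset by blast
  have ne: "I \<noteq> {}" using gn0_ex[of s p] by (auto simp: I_def)
  define i where "i = Max I"
  have "i \<in> I" using fin ne by (simp add: i_def)
  moreover have "A (coeff p k) * s^k < gn0 A s p" if "k > i" for k
  proof -
    have "k \<notin> I" by (metis Max_ge fin i_def not_le that)
    thus ?thesis using gn0_ge[of s p k] assms by (auto simp: I_def)
  qed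
  ultimately show ?thesis using that by (auto simp: I_def)
qed

lemma gn0_mult_pos: assumes "s > 0" shows "gn0 A s (p * q) = gn0 A s p * gn0 A s q"
proof (cases "p = 0 \<or> q = 0")
  case True then show ?thesis by auto
next
  case False
  hence p0: "p \<noteq> 0" and q0: "q \<noteq> 0" by auto
  define gp where "gp = gn0 A s p"
  define gq where "gq = gn0 A s q"
  have gpp: "gp > 0" using gn0_pos assms p0 by (simp add: gp_def)
  have gqp: "gq > 0" using gn0_pos assms q0 by (simp add: gq_def)
  obtain i where i1: "A (coeff p i) * s^i = gp" and i2: "\<And>k. k > i \<Longrightarrow> A (coeff p k) * s^k < gp"
    using max_index[OF assms p0] gp_def by metis
  obtain j where j1: "A (coeff q j) * s^j = gq" and j2: "\<And>k. k > j \<Longrightarrow> A (coeff q k) * s^k < gq"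
    using max_index[OF assms q0] gq_def by metis
  define n where "n = i + j"
  have sn: "s^n > 0" using assms by simp
  have main: "A (coeff p i * coeff q (n - i)) = gp * gq / s^n"
    using i1 j1 assms by (simp add: n_def A_mult field_simps power_add)
  have rest: "A (coeff p k * coeff q (n - k)) < gp * gq / s^n" if "k \<in> {..n} - {i}" for k
  proof -
    have kn: "k \<le> n" "k \<noteq> i" using that by auto
    have X: "A (coeff p k) * s^k \<le> gp" and Y: "A (coeff q (n-k)) * s^(n-k) \<le> gq"
      using gn0_ge[of s p k] gn0_ge[of s q "n-k"] assms gp_def gq_def by auto
    have X0: "0 \<le> A (coeff p k) * s^k" and Y0: "0 \<le> A (coeff q (n-k)) * s^(n-k)"
      using A_nn assms by auto
    have "A (coeff p k) * s^k * (A (coeff q (n-k)) * s^(n-k)) < gp * gq"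
    proof (cases "k > i")
      case True
      hence "A (coeff p k) * s^k < gp" by (rule i2)
      thus ?thesis using Y Y0 X0 gqp gpp
        by (meson le_less_trans mult_left_mono mult_strict_right_mono)
    next
      case False
      hence "n - k > j" using kn by (simp add: n_def)
      hence "A (coeff q (n-k)) * s^(n-k) < gq" by (rule j2)
      thus ?thesis using X X0 Y0 gqp gpp
        by (meson le_less_trans mult_right_mono mult_strict_left_mono)
    qed
    moreover have eq: "s^n = s^k * s^(n-k)" using kn by (simp add: power_add[symmetric])
    moreover have "A (coeff p k * coeff q (n - k)) * s^n = A (coeff p k) * s^k * (A (coeff q (n-k)) * s^(n-k))"
      unfolding A_mult eq by (simp only: mult_ac)
    ultimately have "A (coeff p k * coeff q (n - k)) * s^n < gp * gq" by linarith
    thus ?thesis using sn by (simp add: field_simps)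
  qed
  have cf: "coeff (p*q) n = coeff p i * coeff q (n - i) + (\<Sum>k\<in>{..n} - {i}. coeff p k * coeff q (n - k))"
    unfolding coeff_mult by (subst sum.remove[of _ i]) (auto simp: n_def)
  have "A (\<Sum>k\<in>{..n} - {i}. coeff p k * coeff q (n - k)) < gp * gq / s^n"
    by (rule umn_sum_less[OF A_umn]) (use rest gpp gqp sn in auto)
  hence "A (coeff (p*q) n) = gp * gq / s^n"
    unfolding cf using umn_dom[OF A_umn] main by metis
  hence "gp * gq \<le> gn0 A s (p*q)"
    using gn0_ge[of s "p*q" n] assms sn by (simp add: field_simps)
  moreover have "gn0 A s (p*q) \<le> gp * gq" using gn0_mult_le[OF assms] gp_def gq_def by simp
  ultimately show ?thesis using gp_def gq_def by simp
qed

lemma gn0_mult: assumes "s \<ge> 0" shows "gn0 A s (p * q) = gn0 A s p * gn0 A s q"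
proof (cases "s = 0")
  case True then show ?thesis by (simp add: gn0_at0 A_mult coeff_mult_0)
next
  case False then show ?thesis using gn0_mult_pos assms by simp
qed

lemma gn0_lin: assumes "s \<ge> 0" shows "gn0 A s [:b, 1:] = max (A b) s"
  by (simp add: gn0_def)

lemma gn0_plus_const: assumes "s \<ge> 0" "coeff u 0 = 0"
  shows "gn0 A s (u + [:b:]) = max (A b) (gn0 A s u)"
proof (rule antisym)
  show "gn0 A s (u + [:b:]) \<le> max (A b) (gn0 A s u)"
  proof (rule gn0_le)
    fix k show "A (coeff (u + [:b:]) k) * s ^ k \<le> max (A b) (gn0 A s u)"
      using assms gn0_ge[of s u k] by (cases k) (auto simp: le_max_iff_disj)
  qed
  have "A b \<le> gn0 A s (u + [:b:])" using gn0_ge[of s "u + [:b:]" 0] assms by simp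
  moreover have "gn0 A s u \<le> gn0 A s (u + [:b:])"
  proof -
    obtain k where k: "gn0 A s u = A (coeff u k) * s^k" using gn0_ex by blast
    show ?thesis
    proof (cases k)
      case 0 then show ?thesis using k assms gn0_nn by simp
    next
      case (Suc m) then show ?thesis using k assms gn0_ge[of s "u + [:b:]" k] by simp
    qed
  qed
  ultimately show "max (A b) (gn0 A s u) \<le> gn0 A s (u + [:b:])" by simp
qed

lemma gn0_mono: assumes "0 \<le> s" "s \<le> t" shows "gn0 A s p \<le> gn0 A t p"
proof (rule gn0_le)
  fix k
  have "A (coeff p k) * s^k \<le> A (coeff p k) * t^k"
    using assms A_nn by (intro mult_left_mono power_mono) auto
  thus "A (coeff p k) * s^k \<le> gn0 A t p" using gn0_ge[of t p k] assms by linarith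
qed

lemma gn0_small: assumes "0 \<le> t" "t \<le> 1" "coeff u 0 = 0" shows "gn0 A t u \<le> t * gn0 A 1 u"
proof (rule gn0_le)
  fix k
  show "A (coeff u k) * t^k \<le> t * gn0 A 1 u"
  proof (cases k)
    case 0 then show ?thesis using assms gn0_nn[of 1 u] by simp
  next
    case (Suc m)
    have "t^k \<le> t" using assms Suc by (simp add: power_le_one mult_left_le)
    hence "A (coeff u k) * t^k \<le> A (coeff u k) * t" using A_nn by (simp add: mult_left_mono)
    also have "\<dots> \<le> gn0 A 1 u * t" using gn0_ge[of 1 u k] assms by (simp add: mult_right_mono)
    finally show ?thesis by (simp add: mult.commute)
  qed
qed

end

definition gn :: "('b::field \<Rightarrow> real) \<Rightarrow> 'b \<Rightarrow> real \<Rightarrow> 'b poly \<Rightarrow> real" where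
  "gn A c s p = gn0 A s (pcompose p [:c, 1:])"

lemma pcompose_shift_back: "pcompose (pcompose p [:c, 1:]) [:-c, 1:] = (p :: 'b::comm_ring_1 poly)"
proof -
  have "pcompose [:c, 1:] [:-c, 1:] = [:0, 1:]" by (simp add: pcompose_pCons)
  thus ?thesis by (simp add: pcompose_assoc[symmetric])
qed

lemma pcompose_X: "pcompose [:0, 1:] q = (q :: 'b::comm_ring_1 poly)"
  by (simp add: pcompose_pCons)

lemma pcompose_prod_mset:
  "pcompose (prod_mset (image_mset f R)) q = prod_mset (image_mset (\<lambda>z. pcompose (f z) q) R)"
  for q :: "'b::comm_ring_1 poly"
  by (induction R) (simp_all add: pcompose_mult pcompose_1)

lemma umn_A_nat: assumes "umn A" shows "A (of_nat m) \<le> 1"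
proof (induction m)
  case 0 then show ?case using umn_0[OF assms] by simp
next
  case (Suc m)
  then show ?case using umn_add[OF assms, of 1 "of_nat m"] umn_1[OF assms] by simp
qed

context fixes A :: "'b::field \<Rightarrow> real" assumes AV: "av A"
begin

lemma gn_mult: "s \<ge> 0 \<Longrightarrow> gn A c s (p * q) = gn A c s p * gn A c s q"
  by (simp add: gn_def pcompose_mult gn0_mult[OF AV])

lemma gn_const[simp]: "gn A c s [:a:] = A a"
  by (simp add: gn_def gn0_const[OF AV])

lemma gn_nn: "s \<ge> 0 \<Longrightarrow> 0 \<le> gn A c s p"
  by (simp add: gn_def gn0_nn[OF AV])

lemma gn_add: "s \<ge> 0 \<Longrightarrow> gn A c s (p + q) \<le> max (gn A c s p) (gn A c s q)"
  by (simp add: gn_def pcompose_add gn0_add[OF AV])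

lemma gn_lin: "s \<ge> 0 \<Longrightarrow> gn A c s [:-z, 1:] = max (A (c - z)) s"
proof -
  assume s: "s \<ge> 0"
  have "pcompose [:-z, 1:] [:c, 1:] = [:c - z, 1:]" by (simp add: pcompose_pCons)
  thus ?thesis using gn0_lin[OF AV s] by (simp add: gn_def)
qed

lemma gn_plus_const: assumes "s \<ge> 0" "poly u c = 0"
  shows "gn A c s (u + [:b:]) = max (A b) (gn A c s u)"
proof -
  have "coeff (pcompose u [:c, 1:]) 0 = 0" using assms by simp
  thus ?thesis using gn0_plus_const[OF AV assms(1)] by (simp add: gn_def pcompose_add)
qed

lemma gn_mono: "0 \<le> s \<Longrightarrow> s \<le> t \<Longrightarrow> gn A c s p \<le> gn A c t p"
  by (simp add: gn_def gn0_mono[OF AV])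

lemma gn_small: assumes "0 \<le> t" "t \<le> 1" "poly u a = 0" shows "gn A a t u \<le> t * gn A a 1 u"
proof -
  have "coeff (pcompose u [:a, 1:]) 0 = 0" using assms by simp
  thus ?thesis using gn0_small[OF AV assms(1,2)] by (simp add: gn_def)
qed

lemma gn_ge_coeff: "s \<ge> 0 \<Longrightarrow> A (coeff (pcompose p [:c,1:]) k) * s^k \<le> gn A c s p"
  by (simp add: gn_def gn0_ge[OF AV])

lemma gn_berk: assumes "s \<ge> 0" shows "berk_point A (gn A c s)"
  unfolding berk_point_def
proof (intro conjI allI)
  fix p q
  show "0 \<le> gn A c s p" using gn_nn assms by simp
  show "gn A c s (p * q) = gn A c s p * gn A c s q" using gn_mult assms by simp
  show "gn A c s (p + q) \<le> gn A c s p + gn A c s q"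
    using gn_add[OF assms, of c p q] gn_nn[OF assms, of c p] gn_nn[OF assms, of c q] by linarith
next
  fix a show "gn A c s [:a:] = A a" by simp
qed

lemma berk_umn: assumes "berk_point A x" shows "umn x"
proof -
  have nn: "\<And>p. 0 \<le> x p" and mul: "\<And>p q. x (p*q) = x p * x q"
    and tri: "\<And>p q. x (p+q) \<le> x p + x q" and cst: "\<And>a. x [:a:] = A a"
    using assms by (auto simp: berk_point_def)
  have z: "x 0 = 0" using cst[of 0] A_0[OF AV] by simp
  have o: "x 1 = 1" using cst[of 1] A_1[OF AV] by (simp add: one_pCons)
  have nat: "x (of_nat m) \<le> 1" for m
    using cst[of "of_nat m"] umn_A_nat[OF A_umn[OF AV]] by (simp add: of_nat_poly)
  have "x (p+q) \<le> max (x p) (x q)" for p q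
    by (rule ultra_from_arch[of x]) (use nn z mul tri nat in auto)
  thus ?thesis using nn z o mul by (simp add: umn_def)
qed

lemma berk_upper: assumes "berk_point A x"
  shows "x p \<le> gn A a (x [:-a, 1:]) p"
proof -
  have U: "umn x" using berk_umn assms by simp
  have cst: "\<And>b. x [:b:] = A b" using assms by (auto simp: berk_point_def)
  define H where "H = pcompose p [:a, 1:]"
  define u where "u = [:-a, 1 :: 'b:]"
  define \<sigma> where "\<sigma> = x u"
  have s0: "\<sigma> \<ge> 0" using umn_nn[OF U] by (simp add: \<sigma>_def)
  have "p = pcompose H u" by (simp add: H_def u_def pcompose_shift_back)
  also have "\<dots> = (\<Sum>i\<le>degree H. [:coeff H i:] * u ^ i)"
  proof -
    have d: "degree (map_poly (\<lambda>x. [:x:]) H) = degree H"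
      by (rule degree_map_poly) simp
    show ?thesis unfolding pcompose_altdef poly_altdef d by (simp add: coeff_map_poly)
  qed
  finally have pe: "p = (\<Sum>i\<le>degree H. [:coeff H i:] * u ^ i)" .
  have "x (\<Sum>i\<le>degree H. [:coeff H i:] * u ^ i) \<le> gn0 A \<sigma> H"
  proof (rule umn_sum_le[OF U])
    fix i
    have "x ([:coeff H i:] * u ^ i) = A (coeff H i) * \<sigma>^i"
      by (simp only: umn_mult[OF U] umn_pow[OF U] cst \<sigma>_def)
    also have "\<dots> \<le> gn0 A \<sigma> H" using gn0_ge[OF AV s0] by simp
    finally show "x ([:coeff H i:] * u ^ i) \<le> gn0 A \<sigma> H" .
  qed (use gn0_nn[OF AV s0] in simp)
  hence "x p \<le> gn0 A \<sigma> H" by (subst pe)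
  thus ?thesis by (simp add: gn_def H_def \<sigma>_def u_def)
qed

end

lemma factorization:
  fixes p :: "'b::field poly"
  assumes AC: "\<forall>q::'b poly. degree q > 0 \<longrightarrow> (\<exists>z. poly q z = 0)"
  assumes "p \<noteq> 0"
  shows "\<exists>R. size R = degree p \<and> p = smult (lead_coeff p) (\<Prod>x\<in>#R. [:-x, 1:])"
  using assms(2)
proof (induction "degree p" arbitrary: p rule: less_induct)
  case (less p)
  show ?case
  proof (cases "degree p = 0")
    case True
    thus ?thesis
      by (intro exI[of _ "{#}"]) (auto elim!: degree_eq_zeroE)
  next
    case False
    then obtain x where x: "poly p x = 0"
      using AC by blast
    hence "[:-x, 1:] dvd p"
      using poly_eq_0_iff_dvd by blast
    then obtain q where p_eq: "p = [:-x, 1:] * q"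
      by (elim dvdE)
    have "q \<noteq> 0"
      using less.prems p_eq by auto
    moreover from this have deg: "degree p = Suc (degree q)"
      unfolding p_eq by (subst degree_mult_eq) auto
    ultimately obtain R where R: "size R = degree q" "q = smult (lead_coeff q) (\<Prod>x\<in>#R. [:-x, 1:])"
      using less.hyps[of q] by auto
    have "smult (lead_coeff p) (\<Prod>y\<in>#add_mset x R. [:- y, 1:]) =
          [:- x, 1:] * smult (lead_coeff q) (\<Prod>y\<in>#R. [:- y, 1:])"
      unfolding p_eq lead_coeff_mult by simp
    also note R(2) [symmetric]
    also note p_eq [symmetric]
    finally show ?thesis using R(1)
      by (intro exI[of _ "add_mset x R"]) (auto simp: deg)
  qed
qed

lemma umn_smult_prodf:
  assumes "umn N"
  shows "N (smult l (\<Prod>x\<in>#R. f x)) = N [:l:] * (\<Prod>z\<in>#R. N (f z))"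
proof -
  have e: "smult l (\<Prod>x\<in>#R. f x) = [:l:] * (\<Prod>x\<in>#R. f x)" by simp
  have "N (smult l (\<Prod>x\<in>#R. f x)) = N [:l:] * N (\<Prod>x\<in>#R. f x)"
    unfolding e by (rule umn_mult[OF assms])
  also have "N (\<Prod>x\<in>#R. f x) = (\<Prod>z\<in>#R. N (f z))" by (rule umn_prod_mset[OF assms])
  finally show ?thesis .
qed

lemma umn_smult_prod:
  assumes "umn N"
  shows "N (smult l (\<Prod>x\<in>#R. [:-x, 1:])) = N [:l:] * (\<Prod>z\<in>#R. N [:-z, 1:])"
  by (rule umn_smult_prodf[OF assms])

context fixes A :: "'b::field \<Rightarrow> real" assumes AV: "av A"
begin

lemma gn_umn: "s \<ge> 0 \<Longrightarrow> umn (gn A c s)"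
  using berk_umn[OF AV gn_berk[OF AV]] by blast

lemma berk_eval_split:
  assumes x: "berk_point A x" and pe: "p = smult l (\<Prod>z\<in>#R. [:-z, 1:])"
    and avoid: "\<And>z. z \<in># R \<Longrightarrow> A (c - z) \<noteq> x [:-c, 1:]"
  shows "x p = gn A c (x [:-c, 1:]) p"
proof -
  have U: "umn x" using berk_umn[OF AV x] .
  define \<sigma> where "\<sigma> = x [:-c, 1:]"
  have s0: "\<sigma> \<ge> 0" using umn_nn[OF U] by (simp add: \<sigma>_def)
  have cst: "\<And>b. x [:b:] = A b" using x by (auto simp: berk_point_def)
  have lin: "x [:-z, 1:] = gn A c \<sigma> [:-z, 1:]" if "z \<in># R" for z
  proof -
    have e: "[:-z, 1:] = [:-c, 1:] + [:c - z:]" by simp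
    have "x [:-z, 1:] = max \<sigma> (A (c - z))"
      unfolding e using umn_neq[OF U, of "[:-c, 1:]" "[:c - z:]"] avoid[OF that] cst
      by (simp add: \<sigma>_def)
    thus ?thesis using gn_lin[OF AV s0] by (simp add: max.commute)
  qed
  have im: "image_mset (\<lambda>z. x [:-z, 1:]) R = image_mset (\<lambda>z. gn A c \<sigma> [:-z, 1:]) R"
    by (rule image_mset_cong) (rule lin)
  have xl: "x [:l:] = gn A c \<sigma> [:l:]" using cst gn_const[OF AV] by simp
  have "x p = x [:l:] * (\<Prod>z\<in>#R. x [:-z, 1:])" unfolding pe by (rule umn_smult_prod[OF U])
  also have "\<dots> = gn A c \<sigma> [:l:] * (\<Prod>z\<in>#R. gn A c \<sigma> [:-z, 1:])" by (simp only: im xl)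
  also have "\<dots> = gn A c \<sigma> p" unfolding pe by (rule umn_smult_prod[OF gn_umn[OF s0], symmetric])
  finally show ?thesis by (simp add: \<sigma>_def)
qed

lemma gn_split:
  assumes s0: "s \<ge> 0" and pe: "p = smult l (\<Prod>z\<in>#R. [:-z, 1:])"
  shows "gn A c s p = A l * (\<Prod>z\<in>#R. max (A (c - z)) s)"
proof -
  have "gn A c s p = gn A c s [:l:] * (\<Prod>z\<in>#R. gn A c s [:-z, 1:])"
    unfolding pe by (rule umn_smult_prod[OF gn_umn[OF s0]])
  thus ?thesis using gn_lin[OF AV s0] gn_const[OF AV] by simp
qed

lemma gn_compose:
  assumes AC: "\<forall>q::'b poly. degree q > 0 \<longrightarrow> (\<exists>z. poly q z = 0)"
    and s0: "s \<ge> 0" and qc: "poly q c = c"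
  shows "gn A c s (pcompose p q) = gn A c (gn A c s (q - [:c:])) p"
proof (cases "p = 0")
  case True then show ?thesis by (simp add: gn_def gn0_zero[OF AV])
next
  case False
  obtain R where pe: "p = smult (lead_coeff p) (\<Prod>x\<in>#R. [:-x, 1:])"
    using factorization[OF AC False] by blast
  define t where "t = gn A c s (q - [:c:])"
  have t0: "t \<ge> 0" using gn_nn[OF AV s0] by (simp add: t_def)
  have pq: "pcompose p q = smult (lead_coeff p) (\<Prod>z\<in>#R. (q - [:c:]) + [:c - z:])"
  proof -
    have "pcompose p q = smult (lead_coeff p) (pcompose (\<Prod>x\<in>#R. [:-x, 1:]) q)"
      by (subst pe) (simp add: pcompose_smult)
    also have "pcompose (\<Prod>x\<in>#R. [:-x, 1:]) q = (\<Prod>z\<in>#R. pcompose [:-z, 1:] q)"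
      by (rule pcompose_prod_mset)
    also have "\<dots> = (\<Prod>z\<in>#R. (q - [:c:]) + [:c - z:])"
      by (rule arg_cong[where f = prod_mset], rule image_mset_cong) (simp add: pcompose_pCons algebra_simps)
    finally show ?thesis .
  qed
  have U: "umn (gn A c s)" using gn_umn[OF s0] .
  have im: "image_mset (\<lambda>z. gn A c s ((q - [:c:]) + [:c - z:])) R = image_mset (\<lambda>z. max (A (c - z)) t) R"
    by (rule image_mset_cong) (use gn_plus_const[OF AV s0, of "q - [:c:]" c] qc in \<open>simp add: t_def\<close>)
  have gl: "gn A c s [:lead_coeff p:] = A (lead_coeff p)" by (rule gn_const[OF AV])
  have "gn A c s (pcompose p q) = gn A c s [:lead_coeff p:] * (\<Prod>z\<in>#R. gn A c s ((q - [:c:]) + [:c - z:]))"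
    unfolding pq by (rule umn_smult_prodf[OF U])
  also have "\<dots> = A (lead_coeff p) * (\<Prod>z\<in>#R. max (A (c - z)) t)" by (simp only: im gl)
  also have "\<dots> = gn A c t p" using gn_split[OF t0 pe] by simp
  finally show ?thesis by (simp add: t_def)
qed

end

lemma mx_cont: "continuous_on S (\<lambda>s. mx B s n)"
  by (induction n) (auto intro!: continuous_intros)

lemma poly_iter_Suc: "poly_iter g (Suc n) = pcompose g (poly_iter g n)"
  by (simp add: poly_iter_def)

lemma poly_iter_0: "poly_iter g 0 = [:0, 1:]"
  by (simp add: poly_iter_def)

lemma poly_iter_add: "poly_iter g (m + N) = pcompose (poly_iter g m) (poly_iter g N)"
  for g :: "'b::comm_ring_1 poly"
  by (induction m) (simp_all add: poly_iter_Suc poly_iter_0 pcompose_X pcompose_assoc)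

lemma poly_iter_Suc': "poly_iter g (Suc n) = pcompose (poly_iter g n) g"
  for g :: "'b::comm_ring_1 poly"
  using poly_iter_add[of g n 1] by (simp add: poly_iter_Suc poly_iter_0)

lemma push_berk: assumes "berk_point A x" shows "berk_point A (\<lambda>p. x (pcompose p G))"
  using assms by (simp add: berk_point_def pcompose_mult pcompose_add)

lemma classical_berk: assumes "av A" shows "berk_point A (classical_pt A a)"
proof -
  have U: "umn A" using assms by (simp add: av_def)
  have tri: "A (x + y) \<le> A x + A y" for x y
    using umn_nn[OF U, of x] umn_nn[OF U, of y] umn_add[OF U, of x y] by linarith
  show ?thesis unfolding berk_point_def classical_pt_def
    using umn_nn[OF U] umn_mult[OF U] tri by auto
qed

locale dyn =
  fixes A :: "'b::field \<Rightarrow> real" and g :: "'b poly" and c :: 'b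
  assumes AV: "av A"
    and AC: "\<forall>q::'b poly. degree q > 0 \<longrightarrow> (\<exists>z. poly q z = 0)"
    and deg3: "degree g \<ge> 3"
    and fixc: "poly g c = c"
    and sq: "[:-c, 1:]^2 dvd (g - [:c:])"
begin

definition "h = g - [:c:]"
definition "H = pcompose h [:c, 1:]"
definition "\<phi> s = gn A c s h"
definition "Kv = filled_julia A g"
definition "Y x n p = x (pcompose p (poly_iter g n))"

lemma A_umn': "umn A" using A_umn[OF AV] .
lemma A0[simp]: "A 0 = 0" using A_0[OF AV] .
lemma A1[simp]: "A 1 = 1" using A_1[OF AV] .

lemma h_c: "poly h c = 0" by (simp add: h_def fixc)

lemma deg_h: "degree h = degree g"
proof -
  have "degree [:-c:] < degree g" using deg3 by simp
  hence "degree (g + [:-c:]) = degree g" by (rule degree_add_eq_left)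
  moreover have "g - [:c:] = g + [:-c:]" by (simp add: diff_conv_add_uminus minus_pCons)
  ultimately show ?thesis by (simp only: h_def)
qed

lemma h_nz: "h \<noteq> 0" using deg_h deg3 by auto

lemma deg_H: "degree H = degree g"
  by (simp add: H_def degree_pcompose deg_h)

lemma H_coeff01: "coeff H 0 = 0" "coeff H 1 = 0"
proof -
  obtain q where q: "h = [:-c, 1:]^2 * q" using sq by (auto simp: h_def elim: dvdE)
  have l: "pcompose [:-c, 1:] [:c, 1:] = [:0, 1:]" by (simp add: pcompose_pCons)
  have "H = [:0, 1:]^2 * pcompose q [:c, 1:]"
    by (simp only: H_def q pcompose_mult power2_eq_square l)
  thus "coeff H 0 = 0" "coeff H 1 = 0"
    by (simp_all add: power2_eq_square coeff_pCons mult_pCons_left)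
qed

lemma phi_def': "\<phi> s = gn0 A s H" by (simp add: \<phi>_def gn_def H_def)

lemma phi_nn: "s \<ge> 0 \<Longrightarrow> \<phi> s \<ge> 0" using gn_nn[OF AV] by (simp add: \<phi>_def)

lemma phi_mono: "0 \<le> s \<Longrightarrow> s \<le> t \<Longrightarrow> \<phi> s \<le> \<phi> t" using gn_mono[OF AV] by (simp add: \<phi>_def)

lemma phi_cont: "continuous_on S \<phi>"
  unfolding phi_def' gn0_def by (rule mx_cont)

lemma phi_0: "\<phi> 0 = 0" using gn0_at0[OF AV] H_coeff01 by (simp add: phi_def')

lemma phi_ratio: assumes "0 < s" "s < t" shows "\<phi> s * t < \<phi> t * s"
proof -
  have Hnz: "H \<noteq> 0" using deg_H deg3 by auto
  obtain k where k: "\<phi> s = A (coeff H k) * s^k" using gn0_ex[OF AV] phi_def' by metis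
  have pos: "\<phi> s > 0" using gn0_pos[OF AV assms(1) Hnz] phi_def' by simp
  hence "coeff H k \<noteq> 0" using k by auto
  hence k2: "k \<ge> 2" using H_coeff01 by (cases k; cases "k - 1") auto
  have Ak: "A (coeff H k) > 0" using k pos assms by (metis A_nn[OF AV] less_eq_real_def mult_eq_0_iff zero_less_power)
  have "s^(k-1) < t^(k-1)" using assms k2 by (intro power_strict_mono) auto
  hence "A (coeff H k) * s^(k-1) * (s * t) < A (coeff H k) * t^(k-1) * (s * t)"
    using Ak assms by simp
  moreover have "s^k = s^(k-1) * s" "t^k = t^(k-1) * t" using k2
    by (simp_all add: power_Suc2[symmetric])
  ultimately have "A (coeff H k) * s^k * t < A (coeff H k) * t^k * s" by (simp add: mult_ac)
  moreover have "A (coeff H k) * t^k \<le> \<phi> t" using gn0_ge[OF AV, of t H k] assms phi_def' by simp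
  ultimately show ?thesis using k assms by (smt (verit) mult_right_mono)
qed

lemma phi_strict_mono: assumes "0 < s" "s < t" shows "\<phi> s < \<phi> t"
proof -
  have "\<phi> s * t < \<phi> t * s" by (rule phi_ratio[OF assms])
  moreover have "\<phi> s \<ge> 0" using phi_nn assms by simp
  moreover have "\<phi> s * s \<le> \<phi> s * t" using assms \<open>\<phi> s \<ge> 0\<close> by (simp add: mult_left_mono)
  ultimately have "\<phi> s * s < \<phi> t * s" by linarith
  thus ?thesis using assms by simp
qed

lemma exists_fixed: "\<exists>r>0. \<phi> r = r"
proof -
  define C where "C = \<phi> 1"
  have C0: "C \<ge> 0" using phi_nn by (simp add: C_def)
  define a where "a = min (1/2) (1 / (C + 1))"
  have a0: "a > 0" "a \<le> 1" using C0 by (auto simp: a_def)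
  have "\<phi> a \<le> a^2 * C"
    unfolding phi_def'
  proof (rule gn0_le[OF AV])
    fix k
    show "A (coeff H k) * a^k \<le> a^2 * C"
    proof (cases "k < 2")
      case True then have "coeff H k = 0" using H_coeff01 by (cases k; cases "k - 1") auto
      then show ?thesis using a0 C0 by simp
    next
      case False
      hence "a^k \<le> a^2" using a0 by (simp add: power_decreasing)
      hence "A (coeff H k) * a^k \<le> A (coeff H k) * a^2" using A_nn[OF AV] by (simp add: mult_left_mono)
      also have "\<dots> \<le> C * a^2" using gn0_ge[OF AV, of 1 H k] phi_def' C_def
        by (simp add: mult_right_mono)
      finally show ?thesis by (simp add: mult.commute)
    qed
  qed
  also have "a^2 * C \<le> a"
  proof -
    have "a * C \<le> 1"
    proof -
      have "a \<le> 1 / (C + 1)" by (simp add: a_def)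
      hence "a * C \<le> 1 / (C + 1) * C" using C0 by (rule mult_right_mono)
      hence "a * C \<le> C / (C + 1)" by simp
      also have "\<dots> \<le> 1" using C0 by simp
      finally show ?thesis .
    qed
    thus ?thesis using a0 by (simp add: power2_eq_square mult_left_le mult.assoc)
  qed
  finally have fa: "\<phi> a - a \<le> 0" by simp
  define D where "D = degree H"
  have D3: "D \<ge> 3" using deg_H deg3 by (simp add: D_def)
  have Hnz: "H \<noteq> 0" using D3 D_def by auto
  have AD: "A (coeff H D) > 0" using Hnz A_pos[OF AV] D_def by simp
  define b where "b = max 1 (max a (1 / A (coeff H D)))"
  have b1: "b \<ge> 1" "b \<ge> a" "b \<ge> 1 / A (coeff H D)" by (auto simp: b_def)
  have "b^1 \<le> b^(D-1)" using b1 D3 by (intro power_increasing) auto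
  hence "b \<le> b^(D-1)" by simp
  hence "1 \<le> A (coeff H D) * b^(D-1)" using b1 AD
    by (smt (verit, best) divide_le_eq mult.commute mult_left_mono)
  hence "b \<le> A (coeff H D) * b^(D-1) * b" using b1 by simp
  also have "\<dots> = A (coeff H D) * b^D" using D3 by (simp add: power_Suc2[symmetric] mult.assoc)
  also have "\<dots> \<le> \<phi> b" using gn0_ge[OF AV, of b H D] b1 phi_def' by simp
  finally have fb: "0 \<le> \<phi> b - b" by simp
  have "continuous_on {a..b} (\<lambda>s. \<phi> s - s)"
    by (intro continuous_intros phi_cont)
  then obtain r where r: "a \<le> r" "r \<le> b" "\<phi> r - r = 0"
    using IVT'[of "\<lambda>s. \<phi> s - s" a 0 b] fa fb b1 by auto
  thus ?thesis using a0 by (intro exI[of _ r]) auto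
qed

definition "r = (SOME r. r > 0 \<and> \<phi> r = r)"

lemma r_pos: "r > 0" and phi_r: "\<phi> r = r"
  using someI_ex[OF exists_fixed] by (auto simp: r_def)

lemma phi_below: "0 \<le> s \<Longrightarrow> s \<le> r \<Longrightarrow> \<phi> s \<le> s"
proof -
  assume s: "0 \<le> s" "s \<le> r"
  show ?thesis
  proof (cases "s = 0 \<or> s = r")
    case True then show ?thesis using phi_0 phi_r by auto
  next
    case False
    hence "0 < s" "s < r" using s by auto
    hence "\<phi> s * r < \<phi> r * s" by (rule phi_ratio)
    thus ?thesis using phi_r r_pos by (simp add: mult.commute)
  qed
qed

lemma phi_above: "r < s \<Longrightarrow> s < \<phi> s"
  using phi_ratio[of r s] phi_r r_pos by (simp add: mult.commute)

lemma phi_growth: assumes "r < s" "s \<le> t" shows "(\<phi> s / s) * t \<le> \<phi> t"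
proof (cases "s = t")
  case True then show ?thesis using assms r_pos by simp
next
  case False
  hence "\<phi> s * t < \<phi> t * s" using phi_ratio[of s t] assms r_pos by simp
  thus ?thesis using assms r_pos by (simp add: field_simps)
qed

end

context dyn begin

lemma Y_Suc: "Y x (Suc n) p = Y x n (pcompose p g)"
  by (simp add: Y_def poly_iter_Suc pcompose_assoc)

lemma Y_0: "Y x 0 p = x p" by (simp add: Y_def poly_iter_0)

lemma Y_iter: "Y x n [:0, 1:] = x (poly_iter g n)" by (simp add: Y_def pcompose_X)

lemma Y_berk: "berk_point A x \<Longrightarrow> berk_point A (Y x n)"
  unfolding Y_def by (rule push_berk)

lemma pcompose_lin_c: "pcompose [:-c, 1:] q = q - [:c:]"
  by (simp add: pcompose_pCons diff_conv_add_uminus minus_pCons add.commute)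

lemma Y_rad_Suc: "Y x (Suc n) [:-c, 1:] = Y x n h"
  by (simp add: Y_Suc pcompose_lin_c h_def)

lemma berk_cst: "berk_point A x \<Longrightarrow> x [:a:] = A a" by (simp add: berk_point_def)

lemma iter_bound: assumes "berk_point A x" shows "x (poly_iter g n) \<le> max (Y x n [:-c, 1:]) (A c)"
proof -
  have B: "berk_point A (Y x n)" using Y_berk assms by simp
  have U: "umn (Y x n)" using berk_umn[OF AV B] .
  have e: "[:0, 1:] = [:-c, 1:] + [:c:]" by simp
  have "Y x n [:0, 1:] \<le> max (Y x n [:-c, 1:]) (Y x n [:c:])" unfolding e by (rule umn_add[OF U])
  thus ?thesis using berk_cst[OF B] Y_iter[of x n] by simp
qed

lemma iter_lower: assumes "berk_point A x" shows "Y x n [:-c, 1:] \<le> x (poly_iter g n) + A c"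
proof -
  have B: "berk_point A (Y x n)" using Y_berk assms by simp
  have U: "umn (Y x n)" using berk_umn[OF AV B] .
  have e: "[:-c, 1:] = [:0, 1:] + [:-c:]" by simp
  have "Y x n [:-c, 1:] \<le> max (Y x n [:0, 1:]) (Y x n [:-c:])" unfolding e by (rule umn_add[OF U])
  moreover have "Y x n [:-c:] = A c" using berk_cst[OF B] A_neg[OF AV] by simp
  moreover have "0 \<le> Y x n [:0, 1:]" "0 \<le> A c" using umn_nn[OF U] A_nn[OF AV] by auto
  ultimately show ?thesis using Y_iter[of x n] by (simp add: max_def split: if_splits)
qed

lemma Kv_iff: "x \<in> Kv \<longleftrightarrow> berk_point A x \<and> (\<exists>M>0. \<forall>n. x (poly_iter g n) \<le> M)"
  by (simp add: Kv_def filled_julia_def berk_line_def)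

lemma K1: assumes x: "berk_point A x" and xr: "x [:-c, 1:] \<le> r" shows "x \<in> Kv"
proof -
  have rad: "Y x n [:-c, 1:] \<le> r" for n
  proof (induction n)
    case 0 then show ?case using xr by (simp add: Y_0)
  next
    case (Suc n)
    have B: "berk_point A (Y x n)" using Y_berk x by simp
    have nn: "0 \<le> Y x n [:-c, 1:]" using umn_nn[OF berk_umn[OF AV B]] .
    have "Y x (Suc n) [:-c, 1:] = Y x n h" by (rule Y_rad_Suc)
    also have "\<dots> \<le> gn A c (Y x n [:-c, 1:]) h" by (rule berk_upper[OF AV B])
    also have "\<dots> = \<phi> (Y x n [:-c, 1:])" by (simp add: \<phi>_def)
    also have "\<dots> \<le> \<phi> r" using phi_mono nn Suc by simp
    finally show ?case using phi_r by simp
  qed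
  have "x (poly_iter g n) \<le> max r (A c)" for n
    using iter_bound[OF x, of n] rad[of n] by (simp add: max_def split: if_splits)
  moreover have "max r (A c) > 0" using r_pos by simp
  ultimately show ?thesis using x Kv_iff by blast
qed

lemma ESC: assumes x: "berk_point A x" and s0: "x [:-c, 1:] > r"
  and step: "\<And>n. \<phi> (Y x n [:-c, 1:]) \<le> Y x (Suc n) [:-c, 1:]"
  shows "x \<notin> Kv"
proof
  assume K: "x \<in> Kv"
  define \<sigma> where "\<sigma> = x [:-c, 1:]"
  define lam where "lam = \<phi> \<sigma> / \<sigma>"
  have sp: "\<sigma> > 0" using s0 r_pos by (simp add: \<sigma>_def)
  have l1: "lam > 1" using phi_above[of \<sigma>] s0 sp by (simp add: lam_def \<sigma>_def field_simps)
  have grow: "Y x n [:-c, 1:] \<ge> lam^n * \<sigma>" for n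
  proof (induction n)
    case 0 then show ?case by (simp add: Y_0 \<sigma>_def)
  next
    case (Suc n)
    have "lam^n \<ge> 1" using l1 by simp
    hence "lam^n * \<sigma> \<ge> \<sigma>" using sp by simp
    hence ge: "Y x n [:-c, 1:] \<ge> \<sigma>" using Suc by linarith
    have "lam^(Suc n) * \<sigma> = lam * (lam^n * \<sigma>)" by simp
    also have "\<dots> \<le> lam * Y x n [:-c, 1:]" using Suc l1 by simp
    also have "\<dots> \<le> \<phi> (Y x n [:-c, 1:])"
      using phi_growth[of \<sigma> "Y x n [:-c, 1:]"] s0 ge by (simp add: lam_def \<sigma>_def)
    also have "\<dots> \<le> Y x (Suc n) [:-c, 1:]" by (rule step)
    finally show ?case .
  qed
  obtain M where M: "M > 0" "\<And>n. x (poly_iter g n) \<le> M" using K Kv_iff by blast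
  obtain n where n: "(M + A c) / \<sigma> < lam^n" using real_arch_pow[OF l1] by blast
  have "M + A c < lam^n * \<sigma>" using n sp by (simp add: field_simps)
  also have "\<dots> \<le> Y x n [:-c, 1:]" by (rule grow)
  also have "\<dots> \<le> x (poly_iter g n) + A c" by (rule iter_lower[OF x])
  finally show False using M(2)[of n] by simp
qed

lemma iter_c: "poly (poly_iter g n) c = c"
  by (induction n) (simp_all add: poly_iter_Suc poly_iter_0 poly_pcompose fixc)

lemma K2: assumes "s > r" shows "gn A c s \<notin> Kv" "gn A c s \<in> berk_disk A c s"
proof -
  have s0: "s \<ge> 0" using assms r_pos by simp
  have B: "berk_point A (gn A c s)" by (rule gn_berk[OF AV s0])
  have lin: "gn A c s [:-c, 1:] = s" using gn_lin[OF AV s0, of c c] s0 by simp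
  show "gn A c s \<in> berk_disk A c s" using B lin by (simp add: berk_disk_def berk_line_def)
  have rad: "Y (gn A c s) n [:-c, 1:] = gn A c s (poly_iter g n - [:c:])" for n
    by (simp add: Y_def pcompose_lin_c)
  show "gn A c s \<notin> Kv"
  proof (rule ESC[OF B])
    show "r < gn A c s [:-c, 1:]" using lin assms by simp
    fix n
    have "Y (gn A c s) (Suc n) [:-c, 1:] = Y (gn A c s) n h" by (rule Y_rad_Suc)
    also have "\<dots> = gn A c s (pcompose h (poly_iter g n))" by (simp add: Y_def)
    also have "\<dots> = gn A c (gn A c s (poly_iter g n - [:c:])) h"
      by (rule gn_compose[OF AV AC s0 iter_c])
    also have "\<dots> = \<phi> (Y (gn A c s) n [:-c, 1:])" by (simp add: rad \<phi>_def)
    finally show "\<phi> (Y (gn A c s) n [:-c, 1:]) \<le> Y (gn A c s) (Suc n) [:-c, 1:]" by simp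
  qed
qed

lemma K3: assumes hR: "h = smult l (\<Prod>z\<in>#R. [:-z, 1:])" and small: "\<And>z. z \<in># R \<Longrightarrow> A (c - z) \<le> r"
  shows "Kv = berk_disk A c r"
proof
  show "berk_disk A c r \<subseteq> Kv" using K1 by (auto simp: berk_disk_def berk_line_def)
  show "Kv \<subseteq> berk_disk A c r"
  proof
    fix x assume K: "x \<in> Kv"
    hence x: "berk_point A x" using Kv_iff by blast
    show "x \<in> berk_disk A c r"
    proof (rule ccontr)
      assume "x \<notin> berk_disk A c r"
      hence xr: "x [:-c, 1:] > r" using x by (simp add: berk_disk_def berk_line_def)
      have stepeq: "Y x (Suc n) [:-c, 1:] = \<phi> (Y x n [:-c, 1:])" if "Y x n [:-c, 1:] > r" for n
      proof -
        have B: "berk_point A (Y x n)" using Y_berk x by simp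
        have "Y x n h = gn A c (Y x n [:-c, 1:]) h"
          by (rule berk_eval_split[OF AV B hR]) (use small that in force)
        thus ?thesis using Y_rad_Suc[of x n] by (simp add: \<phi>_def)
      qed
      have big: "Y x n [:-c, 1:] > r" for n
      proof (induction n)
        case 0 then show ?case using xr by (simp add: Y_0)
      next
        case (Suc n) then show ?case using stepeq[OF Suc] phi_above[OF Suc] by simp
      qed
      have "x \<notin> Kv" by (rule ESC[OF x xr]) (simp add: stepeq[OF big])
      thus False using K by simp
    qed
  qed
qed

end

lemma poly_prod_root:
  fixes R :: "'b::field multiset"
  assumes "z \<in># R" shows "poly (smult l (\<Prod>x\<in>#R. [:-x, 1:])) z = 0"
proof -
  have "R = add_mset z (R - {#z#})" using assms by simp
  then have "(\<Prod>x\<in>#R. [:-x, 1:]) = [:-z, 1:] * (\<Prod>x\<in>#R - {#z#}. [:-x, 1:])"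
    by (metis image_mset_add_mset prod_mset.add_mset)
  thus ?thesis by simp
qed

context dyn begin

lemma prod_shape:
  assumes "\<forall>\<zeta>\<in>#R. A (c - \<zeta>) \<le> \<sigma>1 \<or> A (c - \<zeta>) \<ge> \<sigma>2"
  shows "\<exists>C m. \<forall>\<sigma>. \<sigma>1 \<le> \<sigma> \<longrightarrow> \<sigma> \<le> \<sigma>2 \<longrightarrow> (\<Prod>\<zeta>\<in>#R. max (A (c - \<zeta>)) \<sigma>) = C * \<sigma>^m"
  using assms
proof (induction R)
  case empty then show ?case by (intro exI[of _ 1] exI[of _ 0]) simp
next
  case (add z R)
  then obtain C m where Cm: "\<forall>\<sigma>. \<sigma>1 \<le> \<sigma> \<longrightarrow> \<sigma> \<le> \<sigma>2 \<longrightarrow> (\<Prod>\<zeta>\<in>#R. max (A (c - \<zeta>)) \<sigma>) = C * \<sigma>^m"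
    by auto
  show ?case
  proof (cases "A (c - z) \<le> \<sigma>1")
    case True
    show ?thesis
      by (rule exI[of _ C], rule exI[of _ "Suc m"]) (use Cm True in \<open>auto simp: max_def\<close>)
  next
    case False
    hence "A (c - z) \<ge> \<sigma>2" using add.prems by auto
    thus ?thesis
      by (intro exI[of _ "A (c - z) * C"] exI[of _ m]) (use Cm in \<open>auto simp: max_def\<close>)
  qed
qed

lemma pullback:
  assumes hR: "h = smult l (\<Prod>z\<in>#Rh. [:-z, 1:])"
    and gap: "\<forall>z\<in>#Rh. A (c - z) \<le> r \<or> A (c - z) \<ge> \<rho>0" and r0: "r < \<rho>0"
    and w1: "r < A (w - c)" and w2: "A (w - c) \<le> \<rho>0"
  shows "\<exists>z. poly g z = w \<and> r < A (z - c) \<and> A (z - c) < \<rho>0 \<and> \<phi> (A (z - c)) = A (w - c)"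
proof -
  define \<rho> where "\<rho> = A (w - c)"
  have "continuous_on {r..\<rho>0} \<phi>" by (rule phi_cont)
  moreover have "\<phi> r \<le> \<rho>" using phi_r w1 by (simp add: \<rho>_def)
  moreover have "\<rho> \<le> \<phi> \<rho>0" using phi_above[OF r0] w2 by (simp add: \<rho>_def)
  ultimately obtain s where s: "r \<le> s" "s \<le> \<rho>0" "\<phi> s = \<rho>"
    using IVT'[of \<phi> r \<rho> \<rho>0] r0 by auto
  have sr: "r < s" using s phi_r w1 \<rho>_def by (metis order_le_less)
  have sr0: "s < \<rho>0" using s phi_above[OF r0] w2 \<rho>_def by (metis order_le_less not_le)
  define \<sigma>1 where "\<sigma>1 = (r + s) / 2"
  define \<sigma>2 where "\<sigma>2 = (s + \<rho>0) / 2"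
  have o: "r < \<sigma>1" "\<sigma>1 < s" "s < \<sigma>2" "\<sigma>2 < \<rho>0" using sr sr0 by (auto simp: \<sigma>1_def \<sigma>2_def)
  have rp: "r > 0" by (rule r_pos)
  define P where "P = g - [:w:]"
  have PH: "P = h + [:c - w:]" by (simp add: P_def h_def)
  have Pnz: "P \<noteq> 0"
  proof
    assume "P = 0"
    hence "g = [:w:]" by (simp add: P_def)
    thus False using deg3 by simp
  qed
  obtain RP where RP: "P = smult (lead_coeff P) (\<Prod>x\<in>#RP. [:-x, 1:])"
    using factorization[OF AC Pnz] by blast
  have gnP: "gn A c \<sigma> P = max \<rho> (\<phi> \<sigma>)" if "\<sigma> \<ge> 0" for \<sigma>
    unfolding PH using gn_plus_const[OF AV that h_c, of "c - w"] A_commute[OF AV, of c w]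
    by (simp add: \<phi>_def \<rho>_def)
  have gnP2: "gn A c \<sigma> P = A (lead_coeff P) * (\<Prod>\<zeta>\<in>#RP. max (A (c - \<zeta>)) \<sigma>)" if "\<sigma> \<ge> 0" for \<sigma>
    by (rule gn_split[OF AV that RP])
  have ex: "\<exists>\<zeta>\<in>#RP. \<sigma>1 < A (c - \<zeta>) \<and> A (c - \<zeta>) < \<sigma>2"
  proof (rule ccontr)
    assume "\<not> ?thesis"
    hence "\<forall>\<zeta>\<in>#RP. A (c - \<zeta>) \<le> \<sigma>1 \<or> A (c - \<zeta>) \<ge> \<sigma>2" by force
    then obtain C m where Cm: "\<And>\<sigma>. \<sigma>1 \<le> \<sigma> \<Longrightarrow> \<sigma> \<le> \<sigma>2 \<Longrightarrow> (\<Prod>\<zeta>\<in>#RP. max (A (c - \<zeta>)) \<sigma>) = C * \<sigma>^m"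
      using prod_shape by blast
    define K where "K = A (lead_coeff P) * C"
    have V: "gn A c \<sigma> P = K * \<sigma>^m" if "\<sigma>1 \<le> \<sigma>" "\<sigma> \<le> \<sigma>2" for \<sigma>
      using gnP2[of \<sigma>] Cm[OF that] that o rp by (simp add: K_def)
    have p1: "\<phi> \<sigma>1 < \<rho>" using phi_strict_mono[of \<sigma>1 s] o rp s by simp
    have v1: "K * \<sigma>1^m = \<rho>" using V[of \<sigma>1] gnP[of \<sigma>1] o rp p1 by simp
    have vs: "K * s^m = \<rho>" using V[of s] gnP[of s] o rp s by simp
    have p2: "\<phi> \<sigma>2 > \<rho>" using phi_strict_mono[of s \<sigma>2] o rp s by simp
    have v2: "K * \<sigma>2^m > \<rho>" using V[of \<sigma>2] gnP[of \<sigma>2] o rp p2 by simp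
    have \<rho>p: "\<rho> > 0" using w1 rp by (simp add: \<rho>_def)
    show False
    proof (cases m)
      case 0 then show ?thesis using v1 v2 by simp
    next
      case (Suc k)
      have "\<sigma>1^m < s^m" using o rp Suc by (intro power_strict_mono) auto
      moreover have "K > 0" using v1 \<rho>p o rp
        by (metis zero_less_mult_pos2 zero_less_power order_less_trans)
      ultimately have "K * \<sigma>1^m < K * s^m" by simp
      thus ?thesis using v1 vs by simp
    qed
  qed
  then obtain \<zeta> where z: "\<zeta> \<in># RP" "\<sigma>1 < A (c - \<zeta>)" "A (c - \<zeta>) < \<sigma>2" by blast
  have "poly P \<zeta> = 0" using poly_prod_root[OF z(1)] RP by metis
  hence gz: "poly g \<zeta> = w" by (simp add: P_def)
  define x where "x = classical_pt A \<zeta>"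
  have xb: "berk_point A x" using classical_berk[OF AV] by (simp add: x_def)
  have xr: "x [:-c, 1:] = A (c - \<zeta>)" using A_commute[OF AV, of c \<zeta>] by (simp add: x_def classical_pt_def)
  have "x h = gn A c (x [:-c, 1:]) h"
  proof (rule berk_eval_split[OF AV xb hR])
    fix z assume "z \<in># Rh"
    thus "A (c - z) \<noteq> x [:-c, 1:]" using gap xr z o by force
  qed
  moreover have "x h = \<rho>" using gz A_commute[OF AV] by (simp add: x_def classical_pt_def h_def \<rho>_def)
  ultimately have "\<phi> (A (c - \<zeta>)) = \<rho>" using xr by (simp add: \<phi>_def)
  moreover have "A (\<zeta> - c) = A (c - \<zeta>)" by (rule A_commute[OF AV])
  ultimately show ?thesis using gz z o by (intro exI[of _ \<zeta>]) (auto simp: \<rho>_def)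
qed

lemma seed:
  assumes bad: "Kv \<noteq> berk_disk A c r"
  shows "\<exists>Rh l \<rho>0 \<alpha>. h = smult l (\<Prod>z\<in>#Rh. [:-z, 1:]) \<and> \<alpha> \<in># Rh \<and> A (c - \<alpha>) = \<rho>0 \<and> r < \<rho>0
           \<and> (\<forall>z\<in>#Rh. A (c - z) \<le> r \<or> A (c - z) \<ge> \<rho>0)"
proof -
  obtain Rh where hR: "h = smult (lead_coeff h) (\<Prod>x\<in>#Rh. [:-x, 1:])"
    using factorization[OF AC h_nz] by blast
  define Z where "Z = {z. z \<in># Rh \<and> r < A (c - z)}"
  have Zne: "Z \<noteq> {}"
  proof
    assume "Z = {}"
    hence "\<And>z. z \<in># Rh \<Longrightarrow> A (c - z) \<le> r" by (force simp: Z_def)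
    thus False using K3[OF hR] bad by blast
  qed
  have Zfin: "finite Z" by (rule finite_subset[of _ "set_mset Rh"]) (auto simp: Z_def)
  define S where "S = (\<lambda>z. A (c - z)) ` Z"
  have Sfin: "finite S" "S \<noteq> {}" using Zfin Zne by (auto simp: S_def)
  define \<rho>0 where "\<rho>0 = Min S"
  have "\<rho>0 \<in> S" using Sfin by (simp add: \<rho>0_def)
  then obtain \<alpha> where \<alpha>: "\<alpha> \<in> Z" "A (c - \<alpha>) = \<rho>0" by (auto simp: S_def)
  have gap: "\<forall>z\<in>#Rh. A (c - z) \<le> r \<or> A (c - z) \<ge> \<rho>0"
  proof
    fix z assume zR: "z \<in># Rh"
    show "A (c - z) \<le> r \<or> A (c - z) \<ge> \<rho>0"
    proof (cases "r < A (c - z)")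
      case True
      hence "A (c - z) \<in> S" using zR by (auto simp: S_def Z_def)
      thus ?thesis using Sfin by (simp add: \<rho>0_def)
    qed simp
  qed
  show ?thesis using hR \<alpha> gap by (intro exI[of _ Rh] exI[of _ "lead_coeff h"] exI[of _ \<rho>0] exI[of _ \<alpha>]) (auto simp: Z_def)
qed

lemma main_seq:
  assumes bad: "Kv \<noteq> berk_disk A c r"
  shows "\<exists>a::nat \<Rightarrow> 'b. (\<forall>n. r < A (a n - c) \<and> poly (poly_iter g (Suc n)) (a n) = c)
            \<and> (\<lambda>n. A (a n - c)) \<longlonglongrightarrow> r"
proof -
  obtain Rh l \<rho>0 \<alpha> where hR: "h = smult l (\<Prod>z\<in>#Rh. [:-z, 1:])" and \<alpha>R: "\<alpha> \<in># Rh"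
    and \<alpha>r: "A (c - \<alpha>) = \<rho>0" and r0: "r < \<rho>0" and gap: "\<forall>z\<in>#Rh. A (c - z) \<le> r \<or> A (c - z) \<ge> \<rho>0"
    using seed[OF bad] by blast
  define Q where "Q = (\<lambda>w z. poly g z = w \<and> r < A (z - c) \<and> A (z - c) < \<rho>0 \<and> \<phi> (A (z - c)) = A (w - c))"
  define step where "step = (\<lambda>w. SOME z. Q w z)"
  define a where "a = rec_nat \<alpha> (\<lambda>_ w. step w)"
  have a0: "a 0 = \<alpha>" and aS: "a (Suc n) = step (a n)" for n by (simp_all add: a_def)
  have inv: "r < A (a n - c) \<and> A (a n - c) \<le> \<rho>0" for n
  proof (induction n)
    case 0 then show ?case using \<alpha>r r0 A_commute[OF AV, of c \<alpha>] by (simp add: a0)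
  next
    case (Suc n)
    have "\<exists>z. Q (a n) z" using pullback[OF hR gap r0] Suc by (simp add: Q_def)
    hence "Q (a n) (a (Suc n))" unfolding aS step_def by (rule someI_ex)
    then show ?case by (simp add: Q_def)
  qed
  have QS: "Q (a n) (a (Suc n))" for n
  proof -
    have "\<exists>z. Q (a n) z" using pullback[OF hR gap r0] inv[of n] by (simp add: Q_def)
    thus ?thesis unfolding aS step_def by (rule someI_ex)
  qed
  have ga: "poly g (a (Suc n)) = a n" and pa: "\<phi> (A (a (Suc n) - c)) = A (a n - c)" for n
    using QS[of n] by (simp_all add: Q_def)
  have hit: "poly (poly_iter g n) (a n) = \<alpha>" for n
  proof (induction n)
    case 0 then show ?case by (simp add: poly_iter_0 a0)
  next
    case (Suc n) then show ?case by (simp add: poly_iter_Suc' poly_pcompose ga)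
  qed
  have g\<alpha>: "poly g \<alpha> = c"
  proof -
    have "poly h \<alpha> = 0" using poly_prod_root[OF \<alpha>R] hR by metis
    thus ?thesis by (simp add: h_def)
  qed
  have iterc: "poly (poly_iter g (Suc n)) (a n) = c" for n
    by (simp add: poly_iter_Suc poly_pcompose hit g\<alpha>)
  define \<rho> where "\<rho> = (\<lambda>n. A (a n - c))"
  have dec: "decseq \<rho>"
  proof (rule decseq_SucI)
    fix n
    have "\<rho> (Suc n) < \<phi> (\<rho> (Suc n))" using phi_above inv[of "Suc n"] by (simp add: \<rho>_def)
    thus "\<rho> (Suc n) \<le> \<rho> n" using pa[of n] by (simp add: \<rho>_def)
  qed
  have rb: "\<forall>i. r \<le> \<rho> i" using inv by (simp add: \<rho>_def less_imp_le)
  obtain L where L: "\<rho> \<longlonglongrightarrow> L" "\<forall>i. L \<le> \<rho> i"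
    using decseq_convergent[OF dec rb] by blast
  have Lr: "r \<le> L" using LIMSEQ_le_const[OF L(1), of r] rb by blast
  have "isCont \<phi> L" using phi_cont[of UNIV] by (simp add: continuous_on_eq_continuous_at)
  hence "(\<lambda>n. \<phi> (\<rho> (Suc n))) \<longlonglongrightarrow> \<phi> L"
    using isCont_tendsto_compose LIMSEQ_Suc[OF L(1)] by blast
  moreover have "(\<lambda>n. \<phi> (\<rho> (Suc n))) = \<rho>" using pa by (simp add: \<rho>_def)
  ultimately have "\<rho> \<longlonglongrightarrow> \<phi> L" by simp
  hence fL: "\<phi> L = L" using L(1) LIMSEQ_unique by blast
  have "L = r"
  proof (rule ccontr)
    assume "L \<noteq> r"
    hence "r < L" using Lr by simp
    thus False using phi_above[of L] fL by simp
  qed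
  thus ?thesis using inv iterc L(1) by (intro exI[of _ a]) (simp add: \<rho>_def)
qed

end

context dyn begin

lemma hsia_disk:
  assumes z: "z \<in> berk_disk A a t" and tr: "t < A (a - c)"
  shows "hsia A z (classical_pt A c) = A (a - c)"
proof -
  have zb: "berk_point A z" and zt: "z [:-a, 1:] \<le> t" using z by (auto simp: berk_disk_def berk_line_def)
  have U: "umn z" using berk_umn[OF AV zb] .
  have e: "[:-c, 1:] = [:a - c:] + [:-a, 1:]" by simp
  have zc: "z [:-c, 1:] = A (a - c)"
    unfolding e using umn_dom[OF U, of "[:-a, 1:]" "[:a - c:]"] zt tr berk_cst[OF zb] by simp
  define T where "T = {s. \<exists>b. z [:-b, 1:] \<le> s \<and> classical_pt A c [:-b, 1:] \<le> s}"
  have cp: "classical_pt A c [:-b, 1:] = A (c - b)" for b by (simp add: classical_pt_def)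
  have mem: "A (a - c) \<in> T" unfolding T_def using zc cp[of c] A_nn[OF AV] by (intro CollectI exI[of _ c]) simp
  have low: "A (a - c) \<le> s" if sT: "s \<in> T" for s
  proof -
    obtain b where b: "z [:-b, 1:] \<le> s" "A (c - b) \<le> s" using sT cp by (auto simp: T_def)
    have e2: "[:-c, 1:] = [:-b, 1:] + [:b - c:]" by simp
    have "z [:-c, 1:] \<le> max (z [:-b, 1:]) (z [:b - c:])" unfolding e2 by (rule umn_add[OF U])
    moreover have "z [:b - c:] = A (c - b)" using berk_cst[OF zb] A_commute[OF AV] by simp
    ultimately show ?thesis using zc b by (simp add: max_def split: if_splits)
  qed
  have "Inf T = A (a - c)" by (rule cInf_eq_minimum[OF mem low])
  thus ?thesis by (simp add: hsia_def T_def)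
qed

lemma disk_in_Kv:
  assumes ac: "poly (poly_iter g (Suc n)) a = c" and ra: "r < A (a - c)"
  shows "\<exists>t>0. t < A (a - c) \<and> berk_disk A a t \<subseteq> Kv"
proof -
  define N where "N = Suc n"
  define Q where "Q = poly_iter g N - [:c:]"
  define G where "G = gn A a 1 Q"
  have G0: "G \<ge> 0" using gn_nn[OF AV] by (simp add: G_def)
  define t where "t = min (A (a - c) / 2) (min 1 (r / (G + 1)))"
  have rp: "r > 0" by (rule r_pos)
  have tp: "t > 0" using ra rp G0 by (simp add: t_def)
  have tl: "t < A (a - c)" using ra rp by (simp add: t_def)
  have t1: "t \<le> 1" by (simp add: t_def)
  have tG: "t * G \<le> r"
  proof -
    have "t \<le> r / (G + 1)" by (simp add: t_def)
    hence "t * G \<le> r / (G + 1) * G" using G0 by (rule mult_right_mono)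
    also have "\<dots> \<le> r" using G0 rp by (simp add: field_simps)
    finally show ?thesis .
  qed
  have Qa: "poly Q a = 0" using ac by (simp add: Q_def N_def)
  have "berk_disk A a t \<subseteq> Kv"
  proof
    fix x assume xd: "x \<in> berk_disk A a t"
    have xb: "berk_point A x" and xt: "x [:-a, 1:] \<le> t" using xd by (auto simp: berk_disk_def berk_line_def)
    have xn: "0 \<le> x [:-a, 1:]" using umn_nn[OF berk_umn[OF AV xb]] .
    define y where "y = Y x N"
    have yb: "berk_point A y" using Y_berk[OF xb] by (simp add: y_def)
    have "y [:-c, 1:] = x Q" by (simp add: y_def Y_def pcompose_lin_c Q_def)
    also have "\<dots> \<le> gn A a (x [:-a, 1:]) Q" by (rule berk_upper[OF AV xb])
    also have "\<dots> \<le> gn A a t Q" using gn_mono[OF AV xn xt] .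
    also have "\<dots> \<le> t * G" unfolding G_def using gn_small[OF AV _ t1 Qa] tp by simp
    also have "\<dots> \<le> r" by (rule tG)
    finally have "y \<in> Kv" using K1[OF yb] by simp
    then obtain M where M: "M > 0" "\<And>k. y (poly_iter g k) \<le> M" using Kv_iff by blast
    define M' where "M' = M + (\<Sum>j<N. x (poly_iter g j))"
    have Sn: "0 \<le> (\<Sum>j<N. x (poly_iter g j))"
      using umn_nn[OF berk_umn[OF AV xb]] by (simp add: sum_nonneg)
    have "x (poly_iter g k) \<le> M'" for k
    proof (cases "k < N")
      case True
      have "x (poly_iter g k) \<le> (\<Sum>j<N. x (poly_iter g j))"
        using True umn_nn[OF berk_umn[OF AV xb]]
        by (intro member_le_sum) auto
      thus ?thesis using M by (simp add: M'_def)
    next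
      case False
      hence "k = (k - N) + N" by simp
      hence "poly_iter g k = pcompose (poly_iter g (k - N)) (poly_iter g N)"
        by (metis poly_iter_add)
      hence "x (poly_iter g k) = y (poly_iter g (k - N))" by (simp add: y_def Y_def)
      also have "\<dots> \<le> M" by (rule M(2))
      finally show ?thesis using Sn by (simp add: M'_def)
    qed
    moreover have "M' > 0" using M Sn by (simp add: M'_def)
    ultimately show "x \<in> Kv" using xb Kv_iff by blast
  qed
  thus ?thesis using tp tl by blast
qed

lemma Sup_eq: "Sup {s. s > 0 \<and> berk_disk A c s \<subseteq> Kv} = r"
proof (rule cSup_eq_maximum)
  show "r \<in> {s. s > 0 \<and> berk_disk A c s \<subseteq> Kv}"
    using r_pos K1 by (auto simp: berk_disk_def berk_line_def)
  fix s assume "s \<in> {s. s > 0 \<and> berk_disk A c s \<subseteq> Kv}"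
  hence sK: "berk_disk A c s \<subseteq> Kv" by simp
  show "s \<le> r"
  proof (rule ccontr)
    assume "\<not> s \<le> r"
    hence "r < s" by simp
    thus False using K2[of s] sK by blast
  qed
qed

lemma dyn_main:
  assumes bad: "\<not> is_berk_disk A Kv"
  shows "let r' = Sup {s. s > 0 \<and> berk_disk A c s \<subseteq> Kv} in 0 < r' \<and>
            (\<exists>B :: nat \<Rightarrow> ('b poly \<Rightarrow> real) set. \<exists>rs :: nat \<Rightarrow> real.
               (\<forall>i. is_berk_disk A (B i) \<and> B i \<subseteq> Kv \<and> rs i > r' \<and>
                    (\<forall>z\<in>B i. hsia A z (classical_pt A c) = rs i))
               \<and> rs \<longlonglongrightarrow> r')"
proof -
  have bad': "Kv \<noteq> berk_disk A c r"
    using bad r_pos by (auto simp: is_berk_disk_def)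
  obtain a where a: "\<And>n. r < A (a n - c)" "\<And>n. poly (poly_iter g (Suc n)) (a n) = c"
    and lim: "(\<lambda>n. A (a n - c)) \<longlonglongrightarrow> r"
    using main_seq[OF bad'] by blast
  have "\<forall>n. \<exists>t>0. t < A (a n - c) \<and> berk_disk A (a n) t \<subseteq> Kv"
    using disk_in_Kv a by blast
  then obtain t where t: "\<And>n. t n > 0" "\<And>n. t n < A (a n - c)" "\<And>n. berk_disk A (a n) (t n) \<subseteq> Kv"
    by metis
  define B where "B = (\<lambda>n. berk_disk A (a n) (t n))"
  define rs where "rs = (\<lambda>n. A (a n - c))"
  have "\<forall>i. is_berk_disk A (B i) \<and> B i \<subseteq> Kv \<and> rs i > r \<and>
                    (\<forall>z\<in>B i. hsia A z (classical_pt A c) = rs i)"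
    using t a hsia_disk by (auto simp: B_def rs_def is_berk_disk_def)
  moreover have "rs \<longlonglongrightarrow> r" using lim by (simp add: rs_def)
  ultimately show ?thesis using Sup_eq r_pos by (auto simp: Let_def)
qed

end

lemma map_poly_hom_add:
  assumes "\<phi> 0 = 0" "\<And>x y. \<phi> (x + y) = \<phi> x + \<phi> y"
  shows "map_poly \<phi> (p + q) = map_poly \<phi> p + map_poly \<phi> q"
  by (rule poly_eqI) (simp add: coeff_map_poly assms)

lemma map_poly_hom_mult:
  fixes \<phi> :: "'a::comm_ring_1 \<Rightarrow> 'b::comm_ring_1"
  assumes z: "\<phi> 0 = 0" and ad: "\<And>x y. \<phi> (x + y) = \<phi> x + \<phi> y" and mu: "\<And>x y. \<phi> (x * y) = \<phi> x * \<phi> y"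
  shows "map_poly \<phi> (p * q) = map_poly \<phi> p * map_poly \<phi> q"
proof (induction p)
  case 0 then show ?case by simp
next
  case (pCons a p)
  have "map_poly \<phi> (pCons a p * q) = map_poly \<phi> (smult a q + pCons 0 (p * q))"
    by (simp add: mult_pCons_left)
  also have "\<dots> = smult (\<phi> a) (map_poly \<phi> q) + pCons 0 (map_poly \<phi> p * map_poly \<phi> q)"
    by (simp add: map_poly_hom_add[OF z ad] map_poly_smult[of \<phi>, OF z mu] map_poly_pCons[of \<phi>, OF z] pCons.IH z)
  also have "\<dots> = pCons (\<phi> a) (map_poly \<phi> p) * map_poly \<phi> q" by (simp add: mult_pCons_left)
  also have "\<dots> = map_poly \<phi> (pCons a p) * map_poly \<phi> q" by (simp add: map_poly_pCons[of \<phi>, OF z])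
  finally show ?case .
qed

lemma poly_map_hom:
  assumes z: "\<phi> 0 = 0" and ad: "\<And>x y. \<phi> (x + y) = \<phi> x + \<phi> y" and mu: "\<And>x y. \<phi> (x * y) = \<phi> x * \<phi> y"
  shows "poly (map_poly \<phi> p) (\<phi> a) = \<phi> (poly p a)"
  by (induction p) (simp_all add: map_poly_pCons[of \<phi>, OF z] z ad mu)

lemma double_root:
  fixes f :: "'a::field poly"
  assumes "poly f p0 = p0" "poly (pderiv f) p0 = 0"
  shows "\<exists>q. f = [:p0:] + [:-p0, 1:]^2 * q"
proof -
  have "poly (f - [:p0:]) p0 = 0" using assms by simp
  then obtain q1 where q1: "f - [:p0:] = [:-p0, 1:] * q1" using poly_eq_0_iff_dvd by (metis dvdE)
  have pd: "pderiv (f - [:p0:]) = pderiv f" by (simp add: pderiv_diff pderiv_pCons)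
  have d: "pderiv f = [:-p0, 1:] * pderiv q1 + q1 * pderiv [:-p0, 1:]"
    using pd q1 pderiv_mult by metis
  have "pderiv [:-p0, 1:] = 1" by (simp add: pderiv_pCons)
  hence "poly (pderiv f) p0 = poly q1 p0" using d by simp
  hence "poly q1 p0 = 0" using assms by simp
  then obtain q where qq: "q1 = [:-p0, 1:] * q" using poly_eq_0_iff_dvd by (metis dvdE)
  have "f - [:p0:] = [:-p0, 1:]^2 * q" unfolding q1 qq power2_eq_square by (rule mult.assoc[symmetric])
  hence "f = [:p0:] + [:-p0, 1:]^2 * q" by (metis diff_add_cancel add.commute)
  thus ?thesis by blast
qed

theorem mainTheorem5:
  fixes M :: "'i set" and absv :: "'i \<Rightarrow> 'a::field \<Rightarrow> real" and nv :: "'i \<Rightarrow> real"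
    and v :: 'i and f :: "'a poly" and p0 :: 'a
    and absL :: "'b::field \<Rightarrow> real" and \<iota> :: "'a \<Rightarrow> 'b"
  assumes "product_formula_field M absv nv"
    and "v \<in> M" and "nonarch (absv v)"
    and "is_Cv (absv v) absL \<iota>"
    and "degree f \<ge> 3"
    and "poly f p0 = p0" and "poly (pderiv f) p0 = 0"
    and "\<not> is_berk_disk absL (filled_julia absL (map_poly \<iota> f))"
  shows "let Kv = filled_julia absL (map_poly \<iota> f);
             r = Sup {s. s > 0 \<and> berk_disk absL (\<iota> p0) s \<subseteq> Kv}
         in 0 < r \<and>
            (\<exists>B :: nat \<Rightarrow> ('b poly \<Rightarrow> real) set. \<exists>rs :: nat \<Rightarrow> real.
               (\<forall>i. is_berk_disk absL (B i) \<and> B i \<subseteq> Kv \<and> rs i > r \<and>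
                    (\<forall>z\<in>B i. hsia absL z (classical_pt absL (\<iota> p0)) = rs i))
               \<and> rs \<longlonglongrightarrow> r)"
proof -
  define K where "K = absv v"
  have aK: "abs_value K" using assms(1,2) by (simp add: product_formula_field_def K_def)
  have Knn: "\<And>x. 0 \<le> K x" and Kz: "\<And>x. K x = 0 \<longleftrightarrow> x = 0" and Km: "\<And>x y. K (x*y) = K x * K y"
    using aK by (auto simp: abs_value_def)
  have Kna: "\<And>x y. K (x + y) \<le> max (K x) (K y)" using assms(3) by (simp add: nonarch_def K_def)
  have K1: "K 1 = 1"
  proof -
    have "K 1 = K 1 * K 1" using Km[of 1 1] by simp
    moreover have "K 1 \<noteq> 0" using Kz[of 1] by simp
    ultimately show ?thesis by simp
  qed
  have UK: "umn K" using Knn Kz Km Kna K1 by (simp add: umn_def)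
  have C: "is_Cv K absL \<iota>" using assms(4) by (simp add: K_def)
  have i0: "\<iota> 0 = 0" and i1: "\<iota> 1 = 1" and iadd: "\<And>x y. \<iota> (x + y) = \<iota> x + \<iota> y"
    and imul: "\<And>x y. \<iota> (x * y) = \<iota> x * \<iota> y" and iabs: "\<And>x. absL (\<iota> x) = K x"
    and aL: "abs_value absL" and AC: "\<forall>q::'b poly. degree q > 0 \<longrightarrow> (\<exists>z. poly q z = 0)"
    using C by (auto simp: is_Cv_def)
  have Lnn: "\<And>x. 0 \<le> absL x" and Lz: "\<And>x. absL x = 0 \<longleftrightarrow> x = 0" and Lm: "\<And>x y. absL (x*y) = absL x * absL y"
    and Lt: "\<And>x y. absL (x + y) \<le> absL x + absL y"
    using aL by (auto simp: abs_value_def)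
  have inat: "\<iota> (of_nat m) = of_nat m" for m
    by (induction m) (simp_all add: i0 i1 iadd)
  have Lnat: "absL (of_nat m) \<le> 1" for m
    using iabs[of "of_nat m"] inat[of m] umn_A_nat[OF UK, of m] by simp
  have Lna: "absL (x + y) \<le> max (absL x) (absL y)" for x y
    by (rule ultra_from_arch[of absL]) (use Lnn Lz Lm Lt Lnat in auto)
  have L1: "absL 1 = 1" using iabs[of 1] i1 K1 by simp
  have L0: "absL 0 = 0" using Lz by simp
  have AV: "av absL" unfolding av_def umn_def using Lnn L0 L1 Lm Lna Lz by blast
  define g where "g = map_poly \<iota> f"
  define c where "c = \<iota> p0"
  have inz: "\<iota> x \<noteq> 0" if "x \<noteq> 0" for x using iabs[of x] Kz[of x] Lz[of "\<iota> x"] that by auto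
  have dg: "degree g = degree f" unfolding g_def by (rule degree_map_poly) (use inz in auto)
  have gc: "poly g c = c" using poly_map_hom[of \<iota> f p0] i0 iadd imul assms(6) by (simp add: g_def c_def)
  obtain q where fq: "f = [:p0:] + [:-p0, 1:]^2 * q" using double_root[OF assms(6,7)] by blast
  have ineg: "\<iota> (-x) = - \<iota> x" for x using iadd[of x "-x"] i0 by (simp add: eq_neg_iff_add_eq_0 add.commute)
  have mlin: "map_poly \<iota> [:-p0, 1:] = [:-c, 1:]" by (simp add: map_poly_pCons i0 i1 ineg c_def)
  have m1: "map_poly \<iota> [:p0:] = [:c:]" by (simp add: map_poly_pCons[of \<iota>, OF i0] c_def)
  have "g = map_poly \<iota> [:p0:] + map_poly \<iota> ([:-p0, 1:]^2 * q)"
    unfolding g_def fq by (rule map_poly_hom_add[OF i0 iadd])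
  also have "map_poly \<iota> ([:-p0, 1:]^2 * q) = [:-c, 1:]^2 * map_poly \<iota> q"
    by (simp only: power2_eq_square map_poly_hom_mult[of \<iota>, OF i0 iadd imul] mlin)
  finally have "g = [:c:] + [:-c, 1:]^2 * map_poly \<iota> q" using m1 by simp
  hence sq: "[:-c, 1:]^2 dvd (g - [:c:])" by simp
  interpret D: dyn absL g c
    using AV AC assms(5) dg gc sq by (unfold_locales) auto
  have KvE: "D.Kv = filled_julia absL (map_poly \<iota> f)" using D.Kv_def g_def by simp
  have bad: "\<not> is_berk_disk absL D.Kv" using assms(8) KvE by simp
  show ?thesis using D.dyn_main[OF bad] unfolding KvE c_def Let_def .
qed

end
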